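(* Let $F:\mathbb{R}^N\to\mathbb{R}\cup\{+\infty\}$ be convex, proper and lower semicontinuous, $A\in C^1(\operatorname{dom}F;\mathbb{R}^M)$, $J(x):=\frac12\|A(x)\|^2+F(x)$, and for $z^k\in\operatorname{dom}F$ let $J_k(x):=\frac12\|A(z^k)+\nabla A(z^k)^*(x-z^k)\|^2+F(x)$. (a) Let $\rho>0$ and let $\tilde x^k$ be such that some $e^k\in\partial J_k(\tilde x^k)$ satisfies $\|e^k\|\le\rho\|\tilde x^k-z^k\|$. Put $q^k:=e^k-\nabla A(z^k)[A(z^k)+\nabla A(z^k)^*(\tilde x^k-z^k)]\in\partial F(\tilde x^k)$. Suppose that $$F(z^k)-F(\tilde x^k)\ge\langle q^k,z^k-\tilde x^k\rangle+\tfrac12\|z^k-\tilde x^k\|_{\Gamma_k}^2$$ for some symmetric operator $\Gamma_k$ with $\nabla A(z^k)\nabla A(z^k)^*+\Gamma_k\ge(2\rho+\beta)\mathrm{Id}$ for some $\beta>0$. Then $$J(z^k)-J_k(\tilde x^k)\ge\tfrac\beta2\|\tilde x^k-z^k\|^2.$$ (b) Suppose moreover that Assumption 2.1 holds for $z^0$, that $\varepsilon\in(0,\beta)$ and $w$ satisfies $0<w\le\min\{1,\ \mathfrak d/\sqrt{2\beta^{-1}(J(z^0)-\inf F)},\ (\beta-\varepsilon)/(2CA_{\max})\}$, and that the iterates are generated by $z^{k+1}:=(1-w)z^k+w\tilde x^k$, where for every $k$ the point $\tilde x^k$ is an approximate minimiser of $J_k$ (no proximal term) satisfying the accuracy condition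 of (a) with the same $\rho$, and the hypothesis of (a) holds for every $k$ with the same $\beta$. Then: $J(z^k)$ decreases monotonically to some $L\in\mathbb{R}$; every accumulation point $\hat x$ of $\{z^k\}$ is Clarke-critical with $J(\hat x)=L$; and, with $V_L:=\{\hat x\in\operatorname{dom}F\mid0\in\partial_CJ(\hat x),J(\hat x)=L\}$, whenever $V_L=U_1\cup U_2$ with $U_1,U_2$ disjoint closed sets, all accumulation points lie in the same $U_j$ and $\operatorname{dist}(z^k,U_j)\to0$.
   Context: $\nabla A(y)\in\mathbb{R}^{N\times M}$ denotes the transpose of the Jacobian of $A$ at $y$. For a symmetric operator $\Gamma$, $\|x\|_\Gamma^2:=\langle\Gamma x,x\rangle$; operator inequalities $S\ge T$ mean $S-T$ is positive semidefinite. $\partial$ is the convex subdifferential. Assumption 2.1 (for given $z^0$): $\operatorname{lev}_{J(z^0)}J:=\{x\mid J(x)\le J(z^0)\}$ is bounded, $\inf F>-\infty$, $A_{\max}:=\sup_{z\in\operatorname{dom}F}\|A(z)\|<\infty$, and there are $\mathfrak d,C>0$ with $\|A(x)-A(y)-\nabla A(y)^*(x-y)\|\le C\|x-y\|^2$ for all $y\in\operatorname{lev}_{J(z^0)}J$ and $x$ with $\|x-y\|\le\mathfrak d$. Clarke subdifferential: $\partial_CJ(x)=\nabla A(x)A(x)+\partial F(x)$; $x$ is Clarke-critical if $0\in\partial_CJ(x)$. The middle term of the bound on $w$ is $+\infty$ if $J(z^0)=\inf F$. *)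

theory Defs
  imports "HOL-Analysis.Analysis"
begin

definition effdom :: "('a \<Rightarrow> ereal) \<Rightarrow> 'a set" where
  "effdom F = {x. F x < \<infinity>}"

definition proper_fun :: "('a \<Rightarrow> ereal) \<Rightarrow> bool" where
  "proper_fun F \<longleftrightarrow> (\<forall>x. F x \<noteq> -\<infinity>) \<and> (\<exists>x. F x < \<infinity>)"

definition convex_fun :: "('a::real_vector \<Rightarrow> ereal) \<Rightarrow> bool" where
  "convex_fun F \<longleftrightarrow> (\<forall>x y. \<forall>t::real. 0 < t \<and> t < 1 \<longrightarrow>
      F ((1 - t) *\<^sub>R x + t *\<^sub>R y) \<le> ereal (1 - t) * F x + ereal t * F y)"

definition lsc_fun :: "('a::topological_space \<Rightarrow> ereal) \<Rightarrow> bool" where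
  "lsc_fun F \<longleftrightarrow> (\<forall>x. F x \<le> Liminf (at x) F)"

definition subdiff :: "('a::real_inner \<Rightarrow> ereal) \<Rightarrow> 'a \<Rightarrow> 'a set" where
  "subdiff G x = {g. G x < \<infinity> \<and> (\<forall>y. G x + ereal (g \<bullet> (y - x)) \<le> G y)}"

definition Jfun :: "(real^'n \<Rightarrow> real^'m) \<Rightarrow> (real^'n \<Rightarrow> ereal) \<Rightarrow> real^'n \<Rightarrow> ereal" where
  "Jfun A F x = ereal (1/2 * (norm (A x))\<^sup>2) + F x"

text \<open>DA y is the Jacobian matrix of A at y (an M x N matrix), so that
  nabla A(y)^* h = DA y *v h and nabla A(y) u = transpose (DA y) *v u.
  J_k(x) = 1/2 |A(z) + nabla A(z)^*(x - z)|^2 + F(x).\<close>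
definition Jlin :: "(real^'n \<Rightarrow> real^'m) \<Rightarrow> (real^'n \<Rightarrow> real^'n^'m) \<Rightarrow> (real^'n \<Rightarrow> ereal)
    \<Rightarrow> real^'n \<Rightarrow> real^'n \<Rightarrow> ereal" where
  "Jlin A DA F z x = ereal (1/2 * (norm (A z + DA z *v (x - z)))\<^sup>2) + F x"

definition op_ge :: "real^'n^'n \<Rightarrow> real^'n^'n \<Rightarrow> bool" where
  "op_ge S T \<longleftrightarrow> (\<forall>v. 0 \<le> v \<bullet> ((S - T) *v v))"

definition clarke_subdiff :: "(real^'n \<Rightarrow> real^'m) \<Rightarrow> (real^'n \<Rightarrow> real^'n^'m) \<Rightarrow> (real^'n \<Rightarrow> ereal)
    \<Rightarrow> real^'n \<Rightarrow> (real^'n) set" where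
  "clarke_subdiff A DA F x = {transpose (DA x) *v A x + q | q. q \<in> subdiff F x}"

definition accumulation_point :: "(nat \<Rightarrow> 'a::topological_space) \<Rightarrow> 'a \<Rightarrow> bool" where
  "accumulation_point z p \<longleftrightarrow> (\<exists>r. strict_mono r \<and> (z \<circ> r) \<longlonglongrightarrow> p)"

end

theory Submission
  imports Defs
begin

lemma fin_eff:
  assumes "proper_fun F" "x \<in> effdom F"
  shows "F x = ereal (real_of_ereal (F x))"
proof -
  have "F x \<noteq> -\<infinity>" using assms(1) unfolding proper_fun_def by auto
  moreover have "F x \<noteq> \<infinity>" using assms(2) unfolding effdom_def by auto
  ultimately show ?thesis by (cases "F x") auto
qed

lemma dot_transpose: "(u::real^'m) \<bullet> (B *v (v::real^'n)) = (transpose B *v u) \<bullet> v"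
  by (metis dot_lmul_matrix inner_commute transpose_matrix_vector)

lemma small_t:
  fixes c K :: real
  assumes K: "K \<ge> 0" and h: "\<And>t. 0 < t \<Longrightarrow> t < 1 \<Longrightarrow> 0 \<le> c + t * K"
  shows "0 \<le> c"
proof (rule ccontr)
  assume "\<not> 0 \<le> c"
  hence c: "c < 0" by simp
  define t where "t = min (1/2) (-c / (2*(K+1)))"
  have t0: "0 < t" using c K by (simp add: t_def divide_neg_pos)
  have t1: "t < 1" by (simp add: t_def)
  have "t \<le> -c / (2*(K+1))" by (simp add: t_def)
  hence "t * K \<le> (-c / (2*(K+1))) * K" using K by (rule mult_right_mono)
  also have "\<dots> = -c * (K / (2*(K+1)))" by simp
  also have "\<dots> < -c" 
  proof -
    have "K / (2*(K+1)) < 1" using K by (simp add: divide_less_eq)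
    moreover have "0 < -c" using c by simp
    ultimately have "-c * (K / (2*(K+1))) < -c * 1" by (rule mult_strict_left_mono)
    thus ?thesis by simp
  qed
  finally have "c + t*K < 0" by simp
  with h[OF t0 t1] show False by simp
qed

lemma subgrad_part:
  fixes F :: "real^'n \<Rightarrow> ereal" and A :: "real^'n \<Rightarrow> real^'m" and DA :: "real^'n \<Rightarrow> real^'n^'m"
  assumes Fp: "proper_fun F" and conv: "convex_fun F"
    and e: "e \<in> subdiff (Jlin A DA F z) xt"
  shows "e - transpose (DA z) *v (A z + DA z *v (xt - z)) \<in> subdiff F xt"
proof -
  define B where "B = DA z"
  define u where "u = A z + B *v (xt - z)"
  have Jx: "Jlin A DA F z xt < \<infinity>" and Jy: "\<And>y. Jlin A DA F z xt + ereal (e \<bullet> (y - xt)) \<le> Jlin A DA F z y"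
    using e unfolding subdiff_def by auto
  have xtd: "xt \<in> effdom F" using Jx unfolding Jlin_def effdom_def by auto
  define a where "a = real_of_ereal (F xt)"
  have Fa: "F xt = ereal a" unfolding a_def using fin_eff[OF Fp xtd] .
  have "F xt + ereal ((e - transpose B *v u) \<bullet> (y - xt)) \<le> F y" for y
  proof (cases "F y = \<infinity>")
    case True thus ?thesis by simp
  next
    case False
    hence yd: "y \<in> effdom F" unfolding effdom_def by (simp add: less_top)
    define b where "b = real_of_ereal (F y)"
    have Fb: "F y = ereal b" unfolding b_def using fin_eff[OF Fp yd] .
    define d where "d = y - xt"
    define v where "v = B *v d"
    have key: "0 \<le> (u \<bullet> v + b - a - e \<bullet> d) + t * (norm v ^ 2 / 2)" if t: "0 < t" "t < 1" for t
    proof -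
      define m where "m = (1 - t) *\<^sub>R xt + t *\<^sub>R y"
      have m2: "m - z = (xt - z) + t *\<^sub>R d" unfolding m_def d_def by (simp add: algebra_simps)
      have m3: "m - xt = t *\<^sub>R d" unfolding m_def d_def by (simp add: algebra_simps)
      have Fm: "F m \<le> ereal ((1-t)*a + t*b)"
        using conv t unfolding convex_fun_def m_def by (metis Fa Fb times_ereal.simps(1) plus_ereal.simps(1))
      have um: "A z + DA z *v (m - z) = u + t *\<^sub>R v"
        unfolding m2 u_def v_def B_def by (simp add: matrix_vector_right_distrib matrix_scaleR_vector_ac scaleR_matrix_vector_assoc)
      have "ereal (1/2 * (norm u)\<^sup>2) + F xt + ereal (e \<bullet> (t *\<^sub>R d)) \<le> ereal (1/2 * (norm (u + t *\<^sub>R v))\<^sup>2) + F m"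
        using Jy[of m] unfolding Jlin_def um m3 u_def B_def by simp
      also have "\<dots> \<le> ereal (1/2 * (norm (u + t *\<^sub>R v))\<^sup>2) + ereal ((1-t)*a + t*b)"
        using Fm by (rule add_left_mono)
      finally have "1/2 * (norm u)\<^sup>2 + a + t * (e \<bullet> d) \<le> 1/2 * (norm (u + t *\<^sub>R v))\<^sup>2 + ((1-t)*a + t*b)"
        unfolding Fa by simp
      moreover have sq: "(norm (u + t *\<^sub>R v))\<^sup>2 = (norm u)\<^sup>2 + 2 * t * (u \<bullet> v) + t^2 * (norm v)\<^sup>2"
        unfolding power2_norm_eq_inner by (simp add: inner_add_left inner_add_right inner_commute power2_eq_square algebra_simps)
      moreover have "t * ((u \<bullet> v + b - a - e \<bullet> d) + t * (norm v ^ 2 / 2)) = (1/2 * (norm (u + t *\<^sub>R v))\<^sup>2 + ((1-t)*a + t*b)) - (1/2 * (norm u)\<^sup>2 + a + t * (e \<bullet> d))"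
        unfolding sq by (simp add: algebra_simps power2_eq_square)
      ultimately have "0 \<le> t * ((u \<bullet> v + b - a - e \<bullet> d) + t * (norm v ^ 2 / 2))"
        by linarith
      thus ?thesis using t by (simp add: zero_le_mult_iff)
    qed
    have "0 \<le> u \<bullet> v + b - a - e \<bullet> d"
      by (rule small_t[of "norm v ^ 2 / 2"]) (use key in auto)
    moreover have "u \<bullet> v = (transpose B *v u) \<bullet> d" unfolding v_def by (rule dot_transpose)
    ultimately have "a + (e - transpose B *v u) \<bullet> d \<le> b" by (simp add: inner_diff_left)
    thus ?thesis unfolding Fa Fb d_def by simp
  qed
  thus ?thesis unfolding subdiff_def B_def[symmetric] u_def[symmetric] using xtd unfolding effdom_def by auto
qed

lemma jlin_real:
  fixes B :: "real^'n^'m" and \<Gamma> :: "real^'n^'n" and z xt e :: "real^'n" and a0 :: "real^'m"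
  assumes hyp: "a + ((e - transpose B *v (a0 + B *v (xt - z))) \<bullet> (z - xt) + 1/2 * ((z - xt) \<bullet> (\<Gamma> *v (z - xt)))) \<le> c"
    and en: "norm e \<le> \<rho> * norm (xt - z)"
    and psd: "op_ge (transpose B ** B + \<Gamma>) ((2 * \<rho> + \<beta>) *\<^sub>R mat 1)"
  shows "1/2 * (norm (a0 + B *v (xt - z)))\<^sup>2 + a + \<beta>/2 * (norm (xt - z))\<^sup>2 \<le> 1/2 * (norm a0)\<^sup>2 + c"
proof -
  define h where "h = xt - z"
  define P where "P = B *v h"
  have zx: "z - xt = - h" unfolding h_def by simp
  have p1: "0 \<le> h \<bullet> ((transpose B ** B + \<Gamma> - (2 * \<rho> + \<beta>) *\<^sub>R mat 1) *v h)"
    using psd unfolding op_ge_def by blast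
  have p2: "h \<bullet> ((transpose B ** B + \<Gamma> - (2 * \<rho> + \<beta>) *\<^sub>R mat 1) *v h)
      = P \<bullet> P + h \<bullet> (\<Gamma> *v h) - (2 * \<rho> + \<beta>) * (h \<bullet> h)"
  proof -
    have "h \<bullet> (transpose B *v (B *v h)) = P \<bullet> P"
      using dot_transpose[of h "transpose B" "B *v h"] unfolding P_def by simp
    thus ?thesis
      by (simp add: matrix_vector_mult_diff_rdistrib matrix_vector_mult_add_rdistrib
          inner_diff_right inner_add_right matrix_vector_mul_assoc[symmetric]
          scaleR_matrix_vector_assoc[symmetric])
  qed
  have g: "(-h) \<bullet> (\<Gamma> *v (-h)) = h \<bullet> (\<Gamma> *v h)"
    by (simp add: vec.neg)
  have q: "(e - transpose B *v (a0 + P)) \<bullet> (-h) = - (e \<bullet> h) + (a0 \<bullet> P + P \<bullet> P)"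
  proof -
    have t0: "(a0 + P) \<bullet> P = (transpose B *v (a0 + P)) \<bullet> h"
      using dot_transpose[of "a0 + P" B h] unfolding P_def .
    have "(e - X) \<bullet> (-h) = -(e \<bullet> h) + X \<bullet> h" for X by (simp add: inner_diff_left)
    thus ?thesis using t0 by (simp add: inner_add_left)
  qed
  have eh: "e \<bullet> h \<le> \<rho> * (h \<bullet> h)"
  proof -
    have "e \<bullet> h \<le> norm e * norm h" by (rule norm_cauchy_schwarz)
    also have "\<dots> \<le> \<rho> * norm h * norm h" using en unfolding h_def by (simp add: mult_right_mono)
    finally show ?thesis by (simp add: dot_square_norm power2_eq_square mult.assoc)
  qed
  have n1: "(norm (a0 + P))\<^sup>2 = (norm a0)\<^sup>2 + 2 * (a0 \<bullet> P) + P \<bullet> P"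
    unfolding power2_norm_eq_inner by (simp add: inner_add_left inner_add_right inner_commute)
  have n2: "(norm h)\<^sup>2 = h \<bullet> h" by (simp add: power2_norm_eq_inner)
  have hyp': "a + ((- (e \<bullet> h) + (a0 \<bullet> P + P \<bullet> P)) + 1/2 * (h \<bullet> (\<Gamma> *v h))) \<le> c"
    using hyp unfolding zx h_def[symmetric] P_def[symmetric] q g .
  show ?thesis unfolding h_def[symmetric] P_def[symmetric] n1 n2
    using hyp' p1 p2 eh by (simp add: algebra_simps)
qed

lemma partA_real:
  fixes F :: "real^'n \<Rightarrow> ereal" and A :: "real^'n \<Rightarrow> real^'m" and DA :: "real^'n \<Rightarrow> real^'n^'m"
  assumes Fp: "proper_fun F" and conv: "convex_fun F"
    and zd: "z \<in> effdom F"
    and e: "e \<in> subdiff (Jlin A DA F z) xt"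
    and en: "norm e \<le> \<rho> * norm (xt - z)"
    and psd: "op_ge (transpose (DA z) ** DA z + \<Gamma>) ((2 * \<rho> + \<beta>) *\<^sub>R mat 1)"
    and hyp: "F xt + ereal ((e - transpose (DA z) *v (A z + DA z *v (xt - z))) \<bullet> (z - xt)
                  + 1/2 * ((z - xt) \<bullet> (\<Gamma> *v (z - xt)))) \<le> F z"
  shows "xt \<in> effdom F"
    and "e - transpose (DA z) *v (A z + DA z *v (xt - z)) \<in> subdiff F xt"
    and "1/2 * (norm (A z + DA z *v (xt - z)))\<^sup>2 + real_of_ereal (F xt) + \<beta>/2 * (norm (xt - z))\<^sup>2
          \<le> 1/2 * (norm (A z))\<^sup>2 + real_of_ereal (F z)"
    and "Jlin A DA F z xt + ereal (\<beta> / 2 * (norm (xt - z))\<^sup>2) \<le> Jfun A F z"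
proof -
  have Jx: "Jlin A DA F z xt < \<infinity>" using e unfolding subdiff_def by auto
  show xtd: "xt \<in> effdom F" using Jx unfolding Jlin_def effdom_def by auto
  show "e - transpose (DA z) *v (A z + DA z *v (xt - z)) \<in> subdiff F xt"
    by (rule subgrad_part[OF Fp conv e])
  define a where "a = real_of_ereal (F xt)"
  have Fa: "F xt = ereal a" unfolding a_def using fin_eff[OF Fp xtd] .
  define c where "c = real_of_ereal (F z)"
  have Fc: "F z = ereal c" unfolding c_def using fin_eff[OF Fp zd] .
  have hyp': "a + ((e - transpose (DA z) *v (A z + DA z *v (xt - z))) \<bullet> (z - xt)
                  + 1/2 * ((z - xt) \<bullet> (\<Gamma> *v (z - xt)))) \<le> c"
    using hyp unfolding Fa Fc by simp
  have R: "1/2 * (norm (A z + DA z *v (xt - z)))\<^sup>2 + a + \<beta>/2 * (norm (xt - z))\<^sup>2 \<le> 1/2 * (norm (A z))\<^sup>2 + c"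
    by (rule jlin_real[OF hyp' en psd])
  thus "1/2 * (norm (A z + DA z *v (xt - z)))\<^sup>2 + real_of_ereal (F xt) + \<beta>/2 * (norm (xt - z))\<^sup>2
          \<le> 1/2 * (norm (A z))\<^sup>2 + real_of_ereal (F z)" unfolding a_def c_def .
  show "Jlin A DA F z xt + ereal (\<beta> / 2 * (norm (xt - z))\<^sup>2) \<le> Jfun A F z"
    unfolding Jlin_def Jfun_def Fa Fc using R by simp
qed

lemma sq_conv:
  fixes a b :: "'a::real_inner"
  assumes "0 \<le> w" "w \<le> 1"
  shows "(norm ((1-w) *\<^sub>R a + w *\<^sub>R b))\<^sup>2 \<le> (1-w) * (norm a)\<^sup>2 + w * (norm b)\<^sup>2"
proof -
  have "(1-w) * (norm a)\<^sup>2 + w * (norm b)\<^sup>2 - (norm ((1-w) *\<^sub>R a + w *\<^sub>R b))\<^sup>2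
      = w * (1-w) * ((a - b) \<bullet> (a - b))"
    unfolding power2_norm_eq_inner
    by (simp add: inner_add_left inner_add_right inner_diff_left inner_diff_right inner_commute algebra_simps power2_eq_square)
  moreover have "0 \<le> w * (1-w) * ((a - b) \<bullet> (a - b))" using assms by simp
  ultimately show ?thesis by linarith
qed

lemma dom_step:
  fixes F :: "real^'n \<Rightarrow> ereal"
  assumes Fp: "proper_fun F" and conv: "convex_fun F"
    and zd: "z \<in> effdom F" and xd: "x \<in> effdom F" and w: "0 < w" "w \<le> 1"
  shows "(1-w) *\<^sub>R z + w *\<^sub>R x \<in> effdom F"
    and "real_of_ereal (F ((1-w) *\<^sub>R z + w *\<^sub>R x)) \<le> (1-w) * real_of_ereal (F z) + w * real_of_ereal (F x)"
proof -
  define a where "a = real_of_ereal (F z)"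
  have Fa: "F z = ereal a" unfolding a_def using fin_eff[OF Fp zd] .
  define b where "b = real_of_ereal (F x)"
  have Fb: "F x = ereal b" unfolding b_def using fin_eff[OF Fp xd] .
  have le: "F ((1-w) *\<^sub>R z + w *\<^sub>R x) \<le> ereal ((1-w) * a + w * b)"
  proof (cases "w = 1")
    case True thus ?thesis using Fb by simp
  next
    case False
    hence "w < 1" using w by simp
    thus ?thesis using conv w unfolding convex_fun_def by (metis Fa Fb times_ereal.simps(1) plus_ereal.simps(1))
  qed
  thus d: "(1-w) *\<^sub>R z + w *\<^sub>R x \<in> effdom F" unfolding effdom_def by (auto intro: le_less_trans)
  have "F ((1-w) *\<^sub>R z + w *\<^sub>R x) = ereal (real_of_ereal (F ((1-w) *\<^sub>R z + w *\<^sub>R x)))"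
    using fin_eff[OF Fp d] .
  with le show "real_of_ereal (F ((1-w) *\<^sub>R z + w *\<^sub>R x)) \<le> (1-w) * real_of_ereal (F z) + w * real_of_ereal (F x)"
    unfolding a_def[symmetric] b_def[symmetric] by (metis ereal_less_eq(3))
qed

lemma quad_step:
  fixes a0 b0 Az' r :: "'a::real_inner"
  assumes "Az' = (1-w) *\<^sub>R a0 + w *\<^sub>R b0 + r" "0 \<le> w" "w \<le> 1"
    "norm r \<le> R" "norm Az' \<le> M"
  shows "1/2 * (norm Az')\<^sup>2 \<le> (1-w) * (1/2 * (norm a0)\<^sup>2) + w * (1/2 * (norm b0)\<^sup>2) + M * R"
proof -
  define s where "s = (1-w) *\<^sub>R a0 + w *\<^sub>R b0"
  have Az: "Az' = s + r" using assms(1) s_def by simp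
  have e1: "1/2 * (norm Az')\<^sup>2 = 1/2 * (norm s)\<^sup>2 + Az' \<bullet> r - 1/2 * (r \<bullet> r)"
    unfolding Az power2_norm_eq_inner by (simp add: inner_add_left inner_add_right inner_commute algebra_simps)
  have "Az' \<bullet> r \<le> norm Az' * norm r" by (rule norm_cauchy_schwarz)
  also have "\<dots> \<le> M * R" using assms(4,5) by (simp add: mult_mono' order_trans[OF norm_ge_zero])
  finally have e2: "Az' \<bullet> r \<le> M * R" .
  have e3: "(norm s)\<^sup>2 \<le> (1-w) * (norm a0)\<^sup>2 + w * (norm b0)\<^sup>2"
    unfolding s_def by (rule sq_conv[OF assms(2,3)])
  have "0 \<le> r \<bullet> r" by simp
  thus ?thesis using e1 e2 e3 by linarith
qed

lemma lsc_seq: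
  fixes F :: "'a::metric_space \<Rightarrow> ereal"
  assumes lsc: "lsc_fun F" and x: "x \<longlonglongrightarrow> p" and c: "c < F p"
  shows "eventually (\<lambda>j. c < F (x j)) sequentially"
proof -
  have "c < Liminf (at p) F" using lsc c unfolding lsc_fun_def by (metis less_le_trans)
  hence "eventually (\<lambda>y. c < F y) (at p)" by (rule less_LiminfD)
  then obtain d where d: "d > 0" "\<And>y. y \<noteq> p \<Longrightarrow> dist y p < d \<Longrightarrow> c < F y"
    unfolding eventually_at by auto
  have "eventually (\<lambda>j. dist (x j) p < d) sequentially" using x d(1) by (rule tendstoD)
  thus ?thesis by eventually_elim (metis c d(2))
qed

lemma tendsto_mv:
  fixes X :: "nat \<Rightarrow> real^'n^'m" and v :: "nat \<Rightarrow> real^'n"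
  assumes "X \<longlonglongrightarrow> X0" "v \<longlonglongrightarrow> v0"
  shows "(\<lambda>j. X j *v v j) \<longlonglongrightarrow> X0 *v v0"
proof (rule vec_tendstoI)
  fix i
  show "(\<lambda>j. (X j *v v j) $ i) \<longlonglongrightarrow> (X0 *v v0) $ i"
    unfolding matrix_vector_mult_def
    by (simp, intro tendsto_intros tendsto_vec_nth assms)
qed

lemma tendsto_transpose:
  fixes X :: "nat \<Rightarrow> real^'n^'m"
  assumes "X \<longlonglongrightarrow> X0"
  shows "(\<lambda>j. transpose (X j)) \<longlonglongrightarrow> transpose X0"
proof (rule vec_tendstoI)
  fix i
  show "(\<lambda>j. transpose (X j) $ i) \<longlonglongrightarrow> transpose X0 $ i"
  proof (rule vec_tendstoI)
    fix k
    show "(\<lambda>j. transpose (X j) $ i $ k) \<longlonglongrightarrow> transpose X0 $ i $ k"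
      unfolding transpose_def by (simp, intro tendsto_vec_nth assms)
  qed
qed

lemma subdiff_limit:
  fixes F :: "'a::real_inner \<Rightarrow> ereal"
  assumes Fp: "proper_fun F" and lsc: "lsc_fun F"
    and x: "x \<longlonglongrightarrow> p" and q: "q \<longlonglongrightarrow> q0" and sq: "\<And>j. q j \<in> subdiff F (x j)"
    and pd: "p \<in> effdom F"
  shows "q0 \<in> subdiff F p" and "(\<lambda>j. real_of_ereal (F (x j))) \<longlonglongrightarrow> real_of_ereal (F p)"
proof -
  have xd: "x j \<in> effdom F" for j using sq[of j] unfolding subdiff_def effdom_def by auto
  define f where "f y = real_of_ereal (F y)" for y
  have Ff: "y \<in> effdom F \<Longrightarrow> F y = ereal (f y)" for y unfolding f_def by (rule fin_eff[OF Fp])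
  have sub: "f (x j) + q j \<bullet> (y - x j) \<le> f y" if "y \<in> effdom F" for j y
  proof -
    have "F (x j) + ereal (q j \<bullet> (y - x j)) \<le> F y" using sq[of j] unfolding subdiff_def by auto
    thus ?thesis unfolding Ff[OF xd] Ff[OF that] by simp
  qed
  have low: "eventually (\<lambda>j. c < f (x j)) sequentially" if "c < f p" for c
  proof -
    have "ereal c < F p" using that Ff[OF pd] by simp
    from lsc_seq[OF lsc x this] show ?thesis by eventually_elim (simp add: Ff[OF xd])
  qed
  have gl: "(\<lambda>j. f y - q j \<bullet> (y - x j)) \<longlonglongrightarrow> f y - q0 \<bullet> (y - p)" for y
    by (intro tendsto_intros q x)
  show "(\<lambda>j. f (x j)) \<longlonglongrightarrow> f p"
  proof (rule order_tendstoI)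
    fix c assume "c < f p" thus "eventually (\<lambda>j. c < f (x j)) sequentially" by (rule low)
  next
    fix c assume c: "f p < c"
    have "eventually (\<lambda>j. f p - q j \<bullet> (p - x j) < c) sequentially"
      using gl[of p] c by (simp add: order_tendstoD(2))
    thus "eventually (\<lambda>j. f (x j) < c) sequentially"
    proof eventually_elim
      case (elim j) thus ?case using sub[OF pd, of j] by simp
    qed
  qed
  have "F p + ereal (q0 \<bullet> (y - p)) \<le> F y" for y
  proof (cases "F y = \<infinity>")
    case True thus ?thesis by simp
  next
    case False
    hence yd: "y \<in> effdom F" unfolding effdom_def by (simp add: less_top)
    have "f p + q0 \<bullet> (y - p) \<le> f y"
    proof (rule ccontr)
      assume "\<not> ?thesis"
      hence lt: "f y - q0 \<bullet> (y - p) < f p" by simp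
      define c where "c = (f y - q0 \<bullet> (y - p) + f p) / 2"
      have c1: "f y - q0 \<bullet> (y - p) < c" and c2: "c < f p" using lt unfolding c_def by auto
      have "eventually (\<lambda>j. f y - q j \<bullet> (y - x j) < c) sequentially"
        using gl[of y] c1 by (rule order_tendstoD(2))
      moreover have "eventually (\<lambda>j. c < f (x j)) sequentially" using c2 by (rule low)
      ultimately have "eventually (\<lambda>j. False) sequentially"
      proof eventually_elim
        case (elim j) thus ?case using sub[OF yd, of j] by simp
      qed
      thus False by simp
    qed
    thus ?thesis unfolding Ff[OF pd] Ff[OF yd] by simp
  qed
  thus "q0 \<in> subdiff F p" using pd unfolding subdiff_def effdom_def by auto
qed

lemma infdist_lt:
  assumes "infdist x A < e" "A \<noteq> {}"
  shows "\<exists>a\<in>A. dist x a < e"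
proof -
  have "bdd_below ((\<lambda>a. dist x a) ` A)" by (rule bdd_belowI[of _ 0]) auto
  thus ?thesis using assms cINF_less_iff[of A "\<lambda>a. dist x a" e] unfolding infdist_def by auto
qed

lemma acc_in_closure:
  assumes "accumulation_point z p" shows "p \<in> closure (range z)"
proof -
  obtain r where r: "strict_mono r" "(z \<circ> r) \<longlonglongrightarrow> p" using assms unfolding accumulation_point_def by auto
  show ?thesis
  proof (rule Lim_in_closed_set[OF closed_closure _ _ r(2)])
    show "\<forall>\<^sub>F x in sequentially. (z \<circ> r) x \<in> closure (range z)"
      by (rule always_eventually) (simp add: closure_subset[THEN subsetD])
  qed simp
qed

lemma acc_nonempty:
  fixes z :: "nat \<Rightarrow> 'a::heine_borel"
  assumes "bounded (range z)"
  shows "\<exists>p. accumulation_point z p"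
  using bounded_imp_convergent_subsequence[OF assms] unfolding accumulation_point_def by blast

lemma infdist_acc:
  fixes z :: "nat \<Rightarrow> 'a::heine_borel"
  assumes bz: "bounded (range z)"
  shows "(\<lambda>k. infdist (z k) {p. accumulation_point z p}) \<longlonglongrightarrow> 0"
proof (rule ccontr)
  define S where "S = {p. accumulation_point z p}"
  assume "\<not> ?thesis"
  hence "\<not> (\<forall>r>0. \<exists>N. \<forall>k\<ge>N. norm (infdist (z k) S - 0) < r)"
    unfolding LIMSEQ_iff S_def by blast
  then obtain r where r0: "r > 0" "\<forall>N. \<exists>k\<ge>N. r \<le> \<bar>infdist (z k) S\<bar>"
    by (auto simp: not_less)
  hence r: "r > 0" "\<And>N. \<exists>k\<ge>N. r \<le> infdist (z k) S" by (auto simp: infdist_nonneg)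
  have "infinite {k. r \<le> infdist (z k) S}"
    unfolding infinite_nat_iff_unbounded_le using r(2) by auto
  from infinite_enumerate[OF this] obtain r1 :: "nat \<Rightarrow> nat" where r1': "strict_mono r1" "\<forall>n. r1 n \<in> {k. r \<le> infdist (z k) S}"
    by blast
  hence r1: "strict_mono r1" "\<And>n. r \<le> infdist (z (r1 n)) S" by auto
  have "bounded (range (z \<circ> r1))" using bz by (rule bounded_subset) auto
  from bounded_imp_convergent_subsequence[OF this] obtain l and r2 :: "nat \<Rightarrow> nat" where r2: "strict_mono r2" "((z \<circ> r1) \<circ> r2) \<longlonglongrightarrow> l"
    by blast
  have "l \<in> S" unfolding S_def accumulation_point_def mem_Collect_eq
  proof (intro exI conjI)
    show "strict_mono (r1 \<circ> r2)" using r1(1) r2(1) by (rule strict_mono_o)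
    show "(z \<circ> (r1 \<circ> r2)) \<longlonglongrightarrow> l" using r2(2) by (simp add: o_assoc)
  qed
  have "eventually (\<lambda>j. dist (((z \<circ> r1) \<circ> r2) j) l < r) sequentially"
    using r2(2) r(1) by (rule tendstoD)
  then obtain j where "dist (z (r1 (r2 j))) l < r" by (auto simp: eventually_sequentially)
  moreover have "infdist (z (r1 (r2 j))) S \<le> dist (z (r1 (r2 j))) l" using \<open>l \<in> S\<close> by (rule infdist_le)
  ultimately show False using r1(2)[of "r2 j"] by linarith
qed

lemma split_acc:
  fixes z :: "nat \<Rightarrow> 'a::heine_borel"
  assumes bz: "bounded (range z)"
    and st: "(\<lambda>k. dist (z (Suc k)) (z k)) \<longlonglongrightarrow> 0"
    and U: "closed U1" "closed U2" "U1 \<inter> U2 = {}"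
    and SU: "\<And>p. accumulation_point z p \<Longrightarrow> p \<in> U1 \<union> U2"
  shows "\<exists>U\<in>{U1, U2}. U \<noteq> {} \<and> (\<forall>p. accumulation_point z p \<longrightarrow> p \<in> U)
            \<and> (\<lambda>k. infdist (z k) U) \<longlonglongrightarrow> 0"
proof -
  define S where "S = {p. accumulation_point z p}"
  obtain p0 where p0: "p0 \<in> S" using acc_nonempty[OF bz] unfolding S_def by auto
  have inf0: "(\<lambda>k. infdist (z k) S) \<longlonglongrightarrow> 0" unfolding S_def by (rule infdist_acc[OF bz])
  have good: "U \<noteq> {} \<and> (\<forall>p. accumulation_point z p \<longrightarrow> p \<in> U) \<and> (\<lambda>k. infdist (z k) U) \<longlonglongrightarrow> 0"
    if "S \<subseteq> U" for U
  proof -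
    have "U \<noteq> {}" using that p0 by auto
    moreover have "\<forall>p. accumulation_point z p \<longrightarrow> p \<in> U" using that unfolding S_def by auto
    moreover have "(\<lambda>k. infdist (z k) U) \<longlonglongrightarrow> 0"
    proof (rule tendsto_sandwich[OF _ _ tendsto_const inf0])
      show "\<forall>\<^sub>F k in sequentially. 0 \<le> infdist (z k) U" by (simp add: infdist_nonneg)
      show "\<forall>\<^sub>F k in sequentially. infdist (z k) U \<le> infdist (z k) S"
      proof (rule always_eventually, rule allI)
        fix k show "infdist (z k) U \<le> infdist (z k) S" using infdist_mono[OF that, of "z k"] p0 by auto
      qed
    qed
    ultimately show ?thesis by blast
  qed
  show ?thesis
  proof (cases "S \<subseteq> U1 \<or> S \<subseteq> U2")
    case True
    show ?thesis
    proof (cases "S \<subseteq> U1")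
      case True
      hence "U1 \<in> {U1, U2}" "U1 \<noteq> {} \<and> (\<forall>p. accumulation_point z p \<longrightarrow> p \<in> U1) \<and> (\<lambda>k. infdist (z k) U1) \<longlonglongrightarrow> 0"
        using good[OF True] by auto
      thus ?thesis by (rule bexI[rotated])
    next
      case False
      hence S2: "S \<subseteq> U2" using \<open>S \<subseteq> U1 \<or> S \<subseteq> U2\<close> by simp
      hence "U2 \<in> {U1, U2}" "U2 \<noteq> {} \<and> (\<forall>p. accumulation_point z p \<longrightarrow> p \<in> U2) \<and> (\<lambda>k. infdist (z k) U2) \<longlonglongrightarrow> 0"
        using good[OF S2] by auto
      thus ?thesis by (rule bexI[rotated])
    qed
  next
    case False
    then obtain p1 p2 where p1': "p1 \<in> S" "p1 \<notin> U2" and p2': "p2 \<in> S" "p2 \<notin> U1"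
      unfolding subset_iff by blast
    have p1: "p1 \<in> S" "p1 \<in> U1" using p1' SU[of p1] unfolding S_def by auto
    have p2: "p2 \<in> S" "p2 \<in> U2" using p2' SU[of p2] unfolding S_def by auto
    define K where "K = closure (range z)"
    have SK: "S \<subseteq> K" unfolding S_def K_def using acc_in_closure by auto
    have "compact (U1 \<inter> K)" unfolding K_def using U(1) bz by auto
    then obtain \<delta> where \<delta>: "\<delta> > 0" "\<And>x y. x \<in> U1 \<inter> K \<Longrightarrow> y \<in> U2 \<Longrightarrow> \<delta> \<le> dist x y"
      using separate_compact_closed[of "U1 \<inter> K" U2] U by blast
    have "eventually (\<lambda>k. infdist (z k) S < \<delta>/3 \<and> dist (z (Suc k)) (z k) < \<delta>/3) sequentially"
    proof -
      have "eventually (\<lambda>k. dist (infdist (z k) S) 0 < \<delta>/3) sequentially"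
        using inf0 \<delta>(1) by (intro tendstoD) auto
      moreover have "eventually (\<lambda>k. dist (dist (z (Suc k)) (z k)) 0 < \<delta>/3) sequentially"
        using st \<delta>(1) by (intro tendstoD) auto
      ultimately show ?thesis by eventually_elim auto
    qed
    then obtain N where N: "\<And>k. k \<ge> N \<Longrightarrow> infdist (z k) S < \<delta>/3 \<and> dist (z (Suc k)) (z k) < \<delta>/3"
      by (auto simp: eventually_sequentially)
    define P1 where "P1 k \<longleftrightarrow> (\<exists>s\<in>U1 \<inter> K. dist (z k) s < \<delta>/3)" for k
    define P2 where "P2 k \<longleftrightarrow> (\<exists>s\<in>U2. dist (z k) s < \<delta>/3)" for k
    have or: "P1 k \<or> P2 k" if kN: "k \<ge> N" for k
    proof -
      obtain s where s: "s \<in> S" "dist (z k) s < \<delta>/3" using infdist_lt[of "z k" S "\<delta>/3"] N[OF kN] p0 by auto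
      have "s \<in> U1 \<union> U2" using SU s(1) unfolding S_def by auto
      thus ?thesis using s SK unfolding P1_def P2_def by auto
    qed
    have notboth: "\<not> (P1 k \<and> P2 k)" for k
    proof
      assume "P1 k \<and> P2 k"
      then obtain s1 s2 where s: "s1 \<in> U1 \<inter> K" "s2 \<in> U2" "dist (z k) s1 < \<delta>/3" "dist (z k) s2 < \<delta>/3"
        unfolding P1_def P2_def by auto
      have "dist s1 s2 \<le> dist s1 (z k) + dist (z k) s2" by (rule dist_triangle)
      hence "dist s1 s2 < \<delta>" using s(3,4) dist_commute[of s1 "z k"] \<delta>(1) by linarith
      with \<delta>(2)[OF s(1,2)] show False by simp
    qed
    have stay: "P1 (Suc k)" if kN: "k \<ge> N" and P1k: "P1 k" for k
    proof -
      have "\<not> P2 (Suc k)"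
      proof
        assume "P2 (Suc k)"
        then obtain s1 s2 where s: "s1 \<in> U1 \<inter> K" "s2 \<in> U2" "dist (z k) s1 < \<delta>/3" "dist (z (Suc k)) s2 < \<delta>/3"
          using P1k unfolding P1_def P2_def by auto
        have "dist s1 s2 \<le> dist s1 (z k) + dist (z k) (z (Suc k)) + dist (z (Suc k)) s2"
          by (metis dist_triangle add_right_mono order_trans)
        moreover have "dist (z k) (z (Suc k)) < \<delta>/3" using N[OF kN] by (simp add: dist_commute)
        ultimately have "dist s1 s2 < \<delta>" using s(3,4) by (simp add: dist_commute)
        with \<delta>(2)[OF s(1,2)] show False by simp
      qed
      thus ?thesis using or[of "Suc k"] kN by auto
    qed
    have stay2: "P1 m" if "k \<ge> N" "P1 k" "m \<ge> k" for k m
      using that(3)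
    proof (induction m rule: dec_induct)
      case base thus ?case using that(2) .
    next
      case (step m) thus ?case using stay[of m] that(1) by auto
    qed
    obtain r1 where r1: "strict_mono r1" "(z \<circ> r1) \<longlonglongrightarrow> p1" using p1(1) unfolding S_def accumulation_point_def by auto
    obtain r2 where r2: "strict_mono r2" "(z \<circ> r2) \<longlonglongrightarrow> p2" using p2(1) unfolding S_def accumulation_point_def by auto
    obtain M1 where M1: "\<And>j. j \<ge> M1 \<Longrightarrow> dist (z (r1 j)) p1 < \<delta>/3"
      using tendstoD[OF r1(2), of "\<delta>/3"] \<delta>(1) by (auto simp: eventually_sequentially)
    define k0 where "k0 = r1 (max M1 N)"
    have k0N: "k0 \<ge> N" unfolding k0_def using seq_suble[OF r1(1), of "max M1 N"] by auto
    have "P1 k0" unfolding P1_def k0_def using M1[of "max M1 N"] p1 SK by auto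
    obtain M2 where M2: "\<And>j. j \<ge> M2 \<Longrightarrow> dist (z (r2 j)) p2 < \<delta>/3"
      using tendstoD[OF r2(2), of "\<delta>/3"] \<delta>(1) by (auto simp: eventually_sequentially)
    define k1 where "k1 = r2 (max M2 k0)"
    have k1: "k1 \<ge> k0" unfolding k1_def using seq_suble[OF r2(1), of "max M2 k0"] by auto
    have "P2 k1" unfolding P2_def k1_def using M2[of "max M2 k0"] p2 by auto
    moreover have "P1 k1" using stay2[OF k0N \<open>P1 k0\<close> k1] .
    ultimately show ?thesis using notboth by blast
  qed
qed

lemma one_step:
  fixes F :: "real^'n \<Rightarrow> ereal" and A :: "real^'n \<Rightarrow> real^'m" and DA :: "real^'n \<Rightarrow> real^'n^'m"
    and jf :: "real^'n \<Rightarrow> real"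
  assumes Fp: "proper_fun F" and conv: "convex_fun F"
    and jf_eq: "\<And>x. jf x = 1/2 * (norm (A x))\<^sup>2 + real_of_ereal (F x)"
    and Jf: "\<And>x. x \<in> effdom F \<Longrightarrow> Jfun A F x = ereal (jf x)"
    and zd: "z \<in> effdom F" and zlev: "jf z \<le> jf z0" and z0d: "z0 \<in> effdom F"
    and mb: "\<And>x. x \<in> effdom F \<Longrightarrow> m \<le> real_of_ereal (F x)"
    and Mb: "\<And>x. x \<in> effdom F \<Longrightarrow> norm (A x) \<le> M"
    and Tay: "\<forall>y\<in>{x. Jfun A F x \<le> Jfun A F z0}. \<forall>x\<in>effdom F. norm (x - y) \<le> d \<longrightarrow>
              norm (A x - A y - DA y *v (x - y)) \<le> C * (norm (x - y))\<^sup>2"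
    and \<beta>: "\<beta> > 0" and w: "0 < w" "w \<le> 1"
    and wd: "w * sqrt (2 / \<beta> * (jf z0 - m)) \<le> d"
    and wM: "w * (2 * C * M) \<le> \<beta> - \<epsilon>"
    and xtd: "xt \<in> effdom F"
    and jl: "1/2 * (norm (A z + DA z *v (xt - z)))\<^sup>2 + real_of_ereal (F xt) + \<beta>/2 * (norm (xt - z))\<^sup>2
          \<le> 1/2 * (norm (A z))\<^sup>2 + real_of_ereal (F z)"
    and z': "z' = (1 - w) *\<^sub>R z + w *\<^sub>R xt"
  shows "z' \<in> effdom F"
    and "jf z' \<le> (1-w) * jf z + w * (1/2 * (norm (A z + DA z *v (xt - z)))\<^sup>2 + real_of_ereal (F xt))
                 + M * (C * (w\<^sup>2 * (norm (xt - z))\<^sup>2))"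
    and "jf z' \<le> jf z - w * \<epsilon> / 2 * (norm (xt - z))\<^sup>2"
proof -
  define h where "h = xt - z"
  define B where "B = DA z"
  define jl where "jl = 1/2 * (norm (A z + B *v h))\<^sup>2 + real_of_ereal (F xt)"
  show z'd: "z' \<in> effdom F" unfolding z' by (rule dom_step(1)[OF Fp conv zd xtd w])
  have fz': "real_of_ereal (F z') \<le> (1-w) * real_of_ereal (F z) + w * real_of_ereal (F xt)"
    unfolding z' by (rule dom_step(2)[OF Fp conv zd xtd w])
  have jl2: "jl + \<beta>/2 * (norm h)\<^sup>2 \<le> jf z" using jl unfolding jl_def jf_eq h_def B_def .
  have "jl \<ge> m" unfolding jl_def using mb[OF xtd] by (simp add: add_increasing)
  hence hb: "\<beta>/2 * (norm h)\<^sup>2 \<le> jf z0 - m" using jl2 zlev by linarith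
  hence "(norm h)\<^sup>2 \<le> 2 / \<beta> * (jf z0 - m)" using \<beta> by (simp add: field_simps)
  hence "norm h \<le> sqrt (2 / \<beta> * (jf z0 - m))" by (metis norm_ge_zero real_le_rsqrt)
  hence "w * norm h \<le> d" using wd w by (smt (verit) mult_left_mono)
  hence zz: "norm (z' - z) \<le> d" unfolding z' h_def using w
    by (simp add: algebra_simps flip: scaleR_diff_right)
  have z'z: "z' - z = w *\<^sub>R h" unfolding z' h_def by (simp add: algebra_simps)
  have zlev': "z \<in> {x. Jfun A F x \<le> Jfun A F z0}" using zlev Jf[OF zd] Jf[OF z0d] by simp
  have T: "norm (A z' - A z - B *v (z' - z)) \<le> C * (norm (z' - z))\<^sup>2"
    using Tay zlev' z'd zz unfolding B_def by blast
  define r where "r = A z' - A z - B *v (z' - z)"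
  have Az': "A z' = (1-w) *\<^sub>R A z + w *\<^sub>R (A z + B *v h) + r"
    unfolding r_def z'z by (simp add: algebra_simps matrix_scaleR_vector_ac scaleR_matrix_vector_assoc)
  have rR: "norm r \<le> C * (w\<^sup>2 * (norm h)\<^sup>2)" using T unfolding r_def z'z
    by (simp add: power_mult_distrib w(1) less_imp_le)
  have q: "1/2 * (norm (A z'))\<^sup>2 \<le> (1-w) * (1/2 * (norm (A z))\<^sup>2) + w * (1/2 * (norm (A z + B *v h))\<^sup>2)
            + M * (C * (w\<^sup>2 * (norm h)\<^sup>2))"
    by (rule quad_step[OF Az' less_imp_le[OF w(1)] w(2) rR Mb[OF z'd]])
  have d1: "jf z' \<le> (1-w) * jf z + w * jl + M * (C * (w\<^sup>2 * (norm h)\<^sup>2))"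
  proof -
    have "(1-w) * jf z + w * jl + M * (C * (w\<^sup>2 * (norm h)\<^sup>2)) =
      ((1-w) * (1/2 * (norm (A z))\<^sup>2) + w * (1/2 * (norm (A z + B *v h))\<^sup>2) + M * (C * (w\<^sup>2 * (norm h)\<^sup>2)))
      + ((1-w) * real_of_ereal (F z) + w * real_of_ereal (F xt))"
      unfolding jf_eq jl_def by (simp add: algebra_simps)
    thus ?thesis using q fz' jf_eq[of z'] by linarith
  qed
  thus "jf z' \<le> (1-w) * jf z + w * (1/2 * (norm (A z + DA z *v (xt - z)))\<^sup>2 + real_of_ereal (F xt))
                 + M * (C * (w\<^sup>2 * (norm (xt - z))\<^sup>2))" unfolding jl_def h_def B_def .
  have "M * (C * (w\<^sup>2 * (norm h)\<^sup>2)) = (w * (2 * C * M)) * (w * (norm h)\<^sup>2) / 2"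
    by (simp add: power2_eq_square)
  also have "\<dots> \<le> (\<beta> - \<epsilon>) * (w * (norm h)\<^sup>2) / 2"
  proof -
    have "0 \<le> w * (norm h)\<^sup>2" using w by simp
    from mult_right_mono[OF wM this] show ?thesis by (simp add: divide_right_mono)
  qed
  finally have "M * (C * (w\<^sup>2 * (norm h)\<^sup>2)) \<le> (\<beta> - \<epsilon>) * (w * (norm h)\<^sup>2) / 2" .
  moreover have "w * jl \<le> w * (jf z - \<beta>/2 * (norm h)\<^sup>2)" using jl2 w by simp
  ultimately have "jf z' \<le> (1-w) * jf z + w * (jf z - \<beta>/2 * (norm h)\<^sup>2) + (\<beta> - \<epsilon>) * (w * (norm h)\<^sup>2) / 2"
    using d1 by linarith
  moreover have "(1-w) * jf z + w * (jf z - \<beta>/2 * (norm h)\<^sup>2) + (\<beta> - \<epsilon>) * (w * (norm h)\<^sup>2) / 2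
      = jf z - w * \<epsilon> / 2 * (norm h)\<^sup>2" by (simp add: algebra_simps add_divide_distrib diff_divide_distrib)
  ultimately show "jf z' \<le> jf z - w * \<epsilon> / 2 * (norm (xt - z))\<^sup>2" unfolding h_def[symmetric]
    by linarith
qed

theorem lemmaA1:
  fixes F :: "real^'n \<Rightarrow> ereal"
    and A :: "real^'n \<Rightarrow> real^'m"
    and DA :: "real^'n \<Rightarrow> real^'n^'m"
  assumes F_proper: "proper_fun F"
    and F_convex: "convex_fun F"
    and F_lsc: "lsc_fun F"
    and A_deriv: "\<forall>y\<in>effdom F. (A has_derivative (\<lambda>h. DA y *v h)) (at y within effdom F)"
    and DA_cont: "continuous_on (effdom F) DA"
  shows
   "(\<forall>(\<rho>::real) (\<beta>::real) z xt e (\<Gamma>::real^'n^'n).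
       let q = e - transpose (DA z) *v (A z + DA z *v (xt - z)) in
       (\<rho> > 0 \<and> \<beta> > 0 \<and> z \<in> effdom F
        \<and> e \<in> subdiff (Jlin A DA F z) xt \<and> norm e \<le> \<rho> * norm (xt - z)
        \<and> transpose \<Gamma> = \<Gamma>
        \<and> op_ge (transpose (DA z) ** DA z + \<Gamma>) ((2 * \<rho> + \<beta>) *\<^sub>R mat 1)
        \<and> F xt + ereal (q \<bullet> (z - xt) + 1/2 * ((z - xt) \<bullet> (\<Gamma> *v (z - xt)))) \<le> F z)
       \<longrightarrow> q \<in> subdiff F xt
           \<and> Jlin A DA F z xt + ereal (\<beta> / 2 * (norm (xt - z))\<^sup>2) \<le> Jfun A F z)
    \<and>
    (\<forall>(\<rho>::real) (\<beta>::real) (\<epsilon>::real) (w::real) (d::real) (C::real)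
       (z::nat \<Rightarrow> real^'n) (xt::nat \<Rightarrow> real^'n) (e::nat \<Rightarrow> real^'n) (\<Gamma>::nat \<Rightarrow> real^'n^'n).
       (\<rho> > 0 \<and> \<beta> > 0 \<and> z 0 \<in> effdom F
        \<comment> \<open>Assumption 2.1 for z 0\<close>
        \<and> bounded {x. Jfun A F x \<le> Jfun A F (z 0)}
        \<and> Inf (range F) > -\<infinity>
        \<and> bounded (A ` effdom F)
        \<and> d > 0 \<and> C > 0
        \<and> (\<forall>y\<in>{x. Jfun A F x \<le> Jfun A F (z 0)}. \<forall>x\<in>effdom F. norm (x - y) \<le> d \<longrightarrow>
              norm (A x - A y - DA y *v (x - y)) \<le> C * (norm (x - y))\<^sup>2)
        \<comment> \<open>step size\<close>
        \<and> 0 < \<epsilon> \<and> \<epsilon> < \<beta>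
        \<and> 0 < w \<and> w \<le> 1
        \<and> w * sqrt (2 / \<beta> * real_of_ereal (Jfun A F (z 0) - Inf (range F))) \<le> d
        \<and> w * (2 * C * (SUP x\<in>effdom F. norm (A x))) \<le> \<beta> - \<epsilon>
        \<comment> \<open>iteration and the hypotheses of (a) at every k\<close>
        \<and> (\<forall>k. z (Suc k) = (1 - w) *\<^sub>R z k + w *\<^sub>R xt k)
        \<and> (\<forall>k. let q = e k - transpose (DA (z k)) *v (A (z k) + DA (z k) *v (xt k - z k)) in
              e k \<in> subdiff (Jlin A DA F (z k)) (xt k)
              \<and> norm (e k) \<le> \<rho> * norm (xt k - z k)
              \<and> transpose (\<Gamma> k) = \<Gamma> k
              \<and> op_ge (transpose (DA (z k)) ** DA (z k) + \<Gamma> k) ((2 * \<rho> + \<beta>) *\<^sub>R mat 1)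
              \<and> F (xt k) + ereal (q \<bullet> (z k - xt k)
                    + 1/2 * ((z k - xt k) \<bullet> (\<Gamma> k *v (z k - xt k)))) \<le> F (z k)))
       \<longrightarrow> decseq (\<lambda>k. Jfun A F (z k))
           \<and> (\<exists>L::real. (\<lambda>k. Jfun A F (z k)) \<longlonglongrightarrow> ereal L
              \<and> (\<forall>p. accumulation_point z p \<longrightarrow>
                     0 \<in> clarke_subdiff A DA F p \<and> Jfun A F p = ereal L)
              \<and> (\<forall>U1 U2. closed U1 \<and> closed U2 \<and> U1 \<inter> U2 = {}
                   \<and> {p \<in> effdom F. 0 \<in> clarke_subdiff A DA F p \<and> Jfun A F p = ereal L} = U1 \<union> U2
                   \<longrightarrow> (\<exists>U\<in>{U1, U2}. U \<noteq> {}
                          \<and> (\<forall>p. accumulation_point z p \<longrightarrow> p \<in> U)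
                          \<and> (\<lambda>k. infdist (z k) U) \<longlonglongrightarrow> 0))))"
proof (rule conjI)
  show "\<forall>(\<rho>::real) (\<beta>::real) z xt e (\<Gamma>::real^'n^'n).
       let q = e - transpose (DA z) *v (A z + DA z *v (xt - z)) in
       (\<rho> > 0 \<and> \<beta> > 0 \<and> z \<in> effdom F
        \<and> e \<in> subdiff (Jlin A DA F z) xt \<and> norm e \<le> \<rho> * norm (xt - z)
        \<and> transpose \<Gamma> = \<Gamma>
        \<and> op_ge (transpose (DA z) ** DA z + \<Gamma>) ((2 * \<rho> + \<beta>) *\<^sub>R mat 1)
        \<and> F xt + ereal (q \<bullet> (z - xt) + 1/2 * ((z - xt) \<bullet> (\<Gamma> *v (z - xt)))) \<le> F z)
       \<longrightarrow> q \<in> subdiff F xt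
           \<and> Jlin A DA F z xt + ereal (\<beta> / 2 * (norm (xt - z))\<^sup>2) \<le> Jfun A F z"
    unfolding Let_def
  proof (intro allI impI)
    fix \<rho> \<beta> :: real and z xt e :: "real^'n" and \<Gamma> :: "real^'n^'n"
    assume H: "\<rho> > 0 \<and> \<beta> > 0 \<and> z \<in> effdom F
        \<and> e \<in> subdiff (Jlin A DA F z) xt \<and> norm e \<le> \<rho> * norm (xt - z)
        \<and> transpose \<Gamma> = \<Gamma>
        \<and> op_ge (transpose (DA z) ** DA z + \<Gamma>) ((2 * \<rho> + \<beta>) *\<^sub>R mat 1)
        \<and> F xt + ereal ((e - transpose (DA z) *v (A z + DA z *v (xt - z))) \<bullet> (z - xt) + 1/2 * ((z - xt) \<bullet> (\<Gamma> *v (z - xt)))) \<le> F z"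
    show "e - transpose (DA z) *v (A z + DA z *v (xt - z)) \<in> subdiff F xt
           \<and> Jlin A DA F z xt + ereal (\<beta> / 2 * (norm (xt - z))\<^sup>2) \<le> Jfun A F z"
      using partA_real(2,4)[OF F_proper F_convex, where z=z and e=e and xt=xt and \<rho>=\<rho> and \<Gamma>=\<Gamma> and \<beta>=\<beta>] H by blast
  qed
next
  show "(\<forall>(\<rho>::real) (\<beta>::real) (\<epsilon>::real) (w::real) (d::real) (C::real)
       (z::nat \<Rightarrow> real^'n) (xt::nat \<Rightarrow> real^'n) (e::nat \<Rightarrow> real^'n) (\<Gamma>::nat \<Rightarrow> real^'n^'n).
       (\<rho> > 0 \<and> \<beta> > 0 \<and> z 0 \<in> effdom F
        \<comment> \<open>Assumption 2.1 for z 0\<close>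
        \<and> bounded {x. Jfun A F x \<le> Jfun A F (z 0)}
        \<and> Inf (range F) > -\<infinity>
        \<and> bounded (A ` effdom F)
        \<and> d > 0 \<and> C > 0
        \<and> (\<forall>y\<in>{x. Jfun A F x \<le> Jfun A F (z 0)}. \<forall>x\<in>effdom F. norm (x - y) \<le> d \<longrightarrow>
              norm (A x - A y - DA y *v (x - y)) \<le> C * (norm (x - y))\<^sup>2)
        \<comment> \<open>step size\<close>
        \<and> 0 < \<epsilon> \<and> \<epsilon> < \<beta>
        \<and> 0 < w \<and> w \<le> 1
        \<and> w * sqrt (2 / \<beta> * real_of_ereal (Jfun A F (z 0) - Inf (range F))) \<le> d
        \<and> w * (2 * C * (SUP x\<in>effdom F. norm (A x))) \<le> \<beta> - \<epsilon>
        \<comment> \<open>iteration and the hypotheses of (a) at every k\<close>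
        \<and> (\<forall>k. z (Suc k) = (1 - w) *\<^sub>R z k + w *\<^sub>R xt k)
        \<and> (\<forall>k. let q = e k - transpose (DA (z k)) *v (A (z k) + DA (z k) *v (xt k - z k)) in
              e k \<in> subdiff (Jlin A DA F (z k)) (xt k)
              \<and> norm (e k) \<le> \<rho> * norm (xt k - z k)
              \<and> transpose (\<Gamma> k) = \<Gamma> k
              \<and> op_ge (transpose (DA (z k)) ** DA (z k) + \<Gamma> k) ((2 * \<rho> + \<beta>) *\<^sub>R mat 1)
              \<and> F (xt k) + ereal (q \<bullet> (z k - xt k)
                    + 1/2 * ((z k - xt k) \<bullet> (\<Gamma> k *v (z k - xt k)))) \<le> F (z k)))
       \<longrightarrow> decseq (\<lambda>k. Jfun A F (z k))
           \<and> (\<exists>L::real. (\<lambda>k. Jfun A F (z k)) \<longlonglongrightarrow> ereal L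
              \<and> (\<forall>p. accumulation_point z p \<longrightarrow>
                     0 \<in> clarke_subdiff A DA F p \<and> Jfun A F p = ereal L)
              \<and> (\<forall>U1 U2. closed U1 \<and> closed U2 \<and> U1 \<inter> U2 = {}
                   \<and> {p \<in> effdom F. 0 \<in> clarke_subdiff A DA F p \<and> Jfun A F p = ereal L} = U1 \<union> U2
                   \<longrightarrow> (\<exists>U\<in>{U1, U2}. U \<noteq> {}
                          \<and> (\<forall>p. accumulation_point z p \<longrightarrow> p \<in> U)
                          \<and> (\<lambda>k. infdist (z k) U) \<longlonglongrightarrow> 0))))"
    unfolding Let_def
    apply (intro allI impI)
    subgoal premises H for \<rho> \<beta> \<epsilon> w d C z xt e \<Gamma>
    proof -
      have r0: "\<rho> > 0" and b0: "\<beta> > 0" and z0d: "z 0 \<in> effdom F"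
        and lev: "bounded {x. Jfun A F x \<le> Jfun A F (z 0)}"
        and infF: "Inf (range F) > -\<infinity>" and Abd: "bounded (A ` effdom F)"
        and d0: "d > 0" and C0: "C > 0"
        and Tay: "\<forall>y\<in>{x. Jfun A F x \<le> Jfun A F (z 0)}. \<forall>x\<in>effdom F. norm (x - y) \<le> d \<longrightarrow>
              norm (A x - A y - DA y *v (x - y)) \<le> C * (norm (x - y))\<^sup>2"
        and eps: "0 < \<epsilon>" "\<epsilon> < \<beta>" and w: "0 < w" "w \<le> 1"
        and wd: "w * sqrt (2 / \<beta> * real_of_ereal (Jfun A F (z 0) - Inf (range F))) \<le> d"
        and wM: "w * (2 * C * (SUP x\<in>effdom F. norm (A x))) \<le> \<beta> - \<epsilon>"
        and it: "\<And>k. z (Suc k) = (1 - w) *\<^sub>R z k + w *\<^sub>R xt k"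
        using H by blast+
      have hk: "e k \<in> subdiff (Jlin A DA F (z k)) (xt k)
              \<and> norm (e k) \<le> \<rho> * norm (xt k - z k)
              \<and> transpose (\<Gamma> k) = \<Gamma> k
              \<and> op_ge (transpose (DA (z k)) ** DA (z k) + \<Gamma> k) ((2 * \<rho> + \<beta>) *\<^sub>R mat 1)
              \<and> F (xt k) + ereal ((e k - transpose (DA (z k)) *v (A (z k) + DA (z k) *v (xt k - z k))) \<bullet> (z k - xt k)
                    + 1/2 * ((z k - xt k) \<bullet> (\<Gamma> k *v (z k - xt k)))) \<le> F (z k)" for k
        using H by blast
      define jf where "jf x = 1/2 * (norm (A x))\<^sup>2 + real_of_ereal (F x)" for x
      have Jf: "Jfun A F x = ereal (jf x)" if "x \<in> effdom F" for x
        unfolding Jfun_def jf_def using fin_eff[OF F_proper that] by (metis plus_ereal.simps(1))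
      define h where "h k = xt k - z k" for k
      define q where "q k = e k - transpose (DA (z k)) *v (A (z k) + DA (z k) *v (xt k - z k))" for k
      define jl where "jl k = 1/2 * (norm (A (z k) + DA (z k) *v (xt k - z k)))\<^sup>2 + real_of_ereal (F (xt k))" for k
      define m where "m = real_of_ereal (Inf (range F))"
      have "Inf (range F) \<le> F (z 0)" by (rule Inf_lower) simp
      also have "F (z 0) < \<infinity>" using z0d unfolding effdom_def by simp
      finally have Im: "Inf (range F) = ereal m" unfolding m_def using infF by (cases "Inf (range F)") auto
      have mb: "m \<le> real_of_ereal (F x)" if "x \<in> effdom F" for x
      proof -
        have "ereal m \<le> F x" unfolding Im[symmetric] by (rule Inf_lower) simp
        thus ?thesis using fin_eff[OF F_proper that] by (metis ereal_less_eq(3))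
      qed
      define M where "M = (SUP x\<in>effdom F. norm (A x))"
      have Mb: "norm (A x) \<le> M" if "x \<in> effdom F" for x
      proof -
        obtain a where a: "\<forall>y\<in>A ` effdom F. norm y \<le> a" using Abd unfolding bounded_iff by blast
        have "bdd_above ((\<lambda>x. norm (A x)) ` effdom F)" using a by (intro bdd_aboveI[of _ a]) auto
        thus ?thesis unfolding M_def using that by (rule cSUP_upper[rotated])
      qed
      have wd': "w * sqrt (2 / \<beta> * (jf (z 0) - m)) \<le> d"
        using wd unfolding Jf[OF z0d] Im by simp
      have wM': "w * (2 * C * M) \<le> \<beta> - \<epsilon>" using wM unfolding M_def .
      have stepA: "xt k \<in> effdom F \<and> q k \<in> subdiff F (xt k)
          \<and> 1/2 * (norm (A (z k) + DA (z k) *v (xt k - z k)))\<^sup>2 + real_of_ereal (F (xt k)) + \<beta>/2 * (norm (xt k - z k))\<^sup>2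
              \<le> 1/2 * (norm (A (z k)))\<^sup>2 + real_of_ereal (F (z k))"
        if "z k \<in> effdom F" for k
        using partA_real(1,2,3)[OF F_proper F_convex that, where e="e k" and xt="xt k" and \<rho>=\<rho> and \<Gamma>="\<Gamma> k" and \<beta>=\<beta>]
          hk[of k] unfolding q_def by blast
      have stepB: "z (Suc k) \<in> effdom F
          \<and> jf (z (Suc k)) \<le> (1-w) * jf (z k) + w * jl k + M * (C * (w\<^sup>2 * (norm (h k))\<^sup>2))
          \<and> jf (z (Suc k)) \<le> jf (z k) - w * \<epsilon> / 2 * (norm (h k))\<^sup>2"
        if zk: "z k \<in> effdom F" and zl: "jf (z k) \<le> jf (z 0)" for k
        using one_step[OF F_proper F_convex jf_def Jf zk zl z0d mb Mb Tay b0 w wd' wM' _ _ it[of k]]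
          stepA[OF zk] unfolding jl_def h_def by blast
      have inv: "z k \<in> effdom F \<and> jf (z k) \<le> jf (z 0)" for k
      proof (induction k)
        case 0 thus ?case using z0d by simp
      next
        case (Suc k)
        have "0 \<le> w * \<epsilon> / 2 * (norm (h k))\<^sup>2" using w eps by simp
        thus ?case using stepB[of k] Suc by auto
      qed
            have zd: "z k \<in> effdom F" for k using inv by blast
      have xtd: "xt k \<in> effdom F" for k using stepA[OF zd] by blast
      have qsub: "q k \<in> subdiff F (xt k)" for k using stepA[OF zd] by blast
      have jlb: "jl k + \<beta>/2 * (norm (h k))\<^sup>2 \<le> jf (z k)" for k
        using stepA[OF zd, of k] unfolding jl_def jf_def h_def by blast
      have d1: "jf (z (Suc k)) \<le> (1-w) * jf (z k) + w * jl k + M * (C * (w\<^sup>2 * (norm (h k))\<^sup>2))" for k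
        using stepB[OF zd] inv by blast
      have d2: "jf (z (Suc k)) \<le> jf (z k) - w * \<epsilon> / 2 * (norm (h k))\<^sup>2" for k
        using stepB[OF zd] inv by blast
      have nn: "0 \<le> w * \<epsilon> / 2 * (norm (h k))\<^sup>2" for k using w eps by simp
      have dec: "jf (z (Suc k)) \<le> jf (z k)" for k using d2[of k] nn[of k] by linarith
      have jfm: "m \<le> jf x" if "x \<in> effdom F" for x using mb[OF that] unfolding jf_def by (simp add: add_increasing)
      obtain L where L: "(\<lambda>k. jf (z k)) \<longlonglongrightarrow> L"
        using decseq_convergent[of "\<lambda>k. jf (z k)" m] decseq_SucI[of "\<lambda>k. jf (z k)", OF dec] jfm[OF zd] by blast
      have L1: "(\<lambda>k. jf (z (Suc k))) \<longlonglongrightarrow> L" using LIMSEQ_Suc[OF L] .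
      have "(\<lambda>k. w * \<epsilon> / 2 * (norm (h k))\<^sup>2) \<longlonglongrightarrow> 0"
      proof (rule tendsto_sandwich[of "\<lambda>_. 0" _ _ "\<lambda>k. jf (z k) - jf (z (Suc k))"])
        show "\<forall>\<^sub>F n in sequentially. 0 \<le> w * \<epsilon> / 2 * (norm (h n))\<^sup>2" using nn by simp
        show "\<forall>\<^sub>F n in sequentially. w * \<epsilon> / 2 * (norm (h n))\<^sup>2 \<le> jf (z n) - jf (z (Suc n))"
          using d2 by (simp add: algebra_simps)
        show "(\<lambda>k. jf (z k) - jf (z (Suc k))) \<longlonglongrightarrow> 0" using tendsto_diff[OF L L1] by simp
      qed simp
      hence "(\<lambda>k. (w * \<epsilon> / 2 * (norm (h k))\<^sup>2) / (w * \<epsilon> / 2)) \<longlonglongrightarrow> 0 / (w * \<epsilon> / 2)"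
        using w eps by (intro tendsto_divide tendsto_const) auto
      hence "(\<lambda>k. (norm (h k))\<^sup>2) \<longlonglongrightarrow> 0" using w eps by simp
      hence "(\<lambda>k. sqrt ((norm (h k))\<^sup>2)) \<longlonglongrightarrow> sqrt 0" by (rule tendsto_real_sqrt)
      hence hn: "(\<lambda>k. norm (h k)) \<longlonglongrightarrow> 0" by simp
      hence hz: "h \<longlonglongrightarrow> 0" using tendsto_norm_zero_iff by blast
      have "(\<lambda>k. w * jl k) \<longlonglongrightarrow> w * L"
      proof (rule tendsto_sandwich[of "\<lambda>k. jf (z (Suc k)) - (1-w) * jf (z k) - M * (C * (w\<^sup>2 * (norm (h k))\<^sup>2))"
            _ _ "\<lambda>k. w * jf (z k)"])
        show "\<forall>\<^sub>F n in sequentially. jf (z (Suc n)) - (1-w) * jf (z n) - M * (C * (w\<^sup>2 * (norm (h n))\<^sup>2)) \<le> w * jl n"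
          using d1 by (simp add: algebra_simps)
        have "w * jl n \<le> w * jf (z n)" for n
        proof -
          have "0 \<le> \<beta>/2 * (norm (h n))\<^sup>2" using b0 by simp
          hence "jl n \<le> jf (z n)" using jlb[of n] by linarith
          thus ?thesis using w by simp
        qed
        thus "\<forall>\<^sub>F n in sequentially. w * jl n \<le> w * jf (z n)" by simp
        have "(\<lambda>k. jf (z (Suc k)) - (1-w) * jf (z k) - M * (C * (w\<^sup>2 * (norm (h k))\<^sup>2))) \<longlonglongrightarrow> L - (1-w) * L - M * (C * (w\<^sup>2 * 0\<^sup>2))"
          by (intro tendsto_intros L L1 hn)
        thus "(\<lambda>k. jf (z (Suc k)) - (1-w) * jf (z k) - M * (C * (w\<^sup>2 * (norm (h k))\<^sup>2))) \<longlonglongrightarrow> w * L"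
          by (simp add: algebra_simps)
        show "(\<lambda>k. w * jf (z k)) \<longlonglongrightarrow> w * L" by (intro tendsto_intros L)
      qed
      hence "(\<lambda>k. (w * jl k) / w) \<longlonglongrightarrow> (w * L) / w" using w by (intro tendsto_divide tendsto_const) auto
      hence jlL: "jl \<longlonglongrightarrow> L" using w by simp
      have Jz: "Jfun A F (z k) = ereal (jf (z k))" for k using Jf[OF zd] .
      have fjf: "real_of_ereal (F x) \<le> jf x" for x unfolding jf_def by simp
      have accP: "0 \<in> clarke_subdiff A DA F p \<and> Jfun A F p = ereal L \<and> p \<in> effdom F"
        if acc: "accumulation_point z p" for p
      proof -
        obtain r where r: "strict_mono r" "(z \<circ> r) \<longlonglongrightarrow> p" using acc unfolding accumulation_point_def by blast
        have zr: "(\<lambda>j. z (r j)) \<longlonglongrightarrow> p" using r(2) by (simp add: o_def)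
        have "F p \<le> ereal (jf (z 0))"
        proof (rule ccontr)
          assume "\<not> ?thesis"
          hence "ereal (jf (z 0)) < F p" by simp
          from lsc_seq[OF F_lsc zr this] obtain j where "ereal (jf (z 0)) < F (z (r j))"
            by (auto simp: eventually_sequentially)
          moreover have "F (z (r j)) \<le> ereal (jf (z 0))"
            using fin_eff[OF F_proper zd[of "r j"]] fjf[of "z (r j)"] inv[of "r j"]
            by (metis ereal_less_eq(3) order_trans)
          ultimately show False by simp
        qed
        hence pd: "p \<in> effdom F" unfolding effdom_def by (auto intro: le_less_trans)
        have hr: "(\<lambda>j. h (r j)) \<longlonglongrightarrow> 0" using LIMSEQ_subseq_LIMSEQ[OF hz r(1)] by (simp add: o_def)
        have xtr: "(\<lambda>j. xt (r j)) \<longlonglongrightarrow> p"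
        proof -
          have "(\<lambda>j. z (r j) + h (r j)) \<longlonglongrightarrow> p + 0" by (intro tendsto_intros zr hr)
          thus ?thesis unfolding h_def by simp
        qed
        have Acont: "continuous (at p within effdom F) A"
          using has_derivative_continuous A_deriv pd by blast
        have Ar: "(\<lambda>j. A (z (r j))) \<longlonglongrightarrow> A p"
          by (rule continuous_within_tendsto_compose'[OF Acont zd zr])
        have DAcont: "continuous (at p within effdom F) DA"
          using DA_cont pd continuous_on_eq_continuous_within by blast
        have DAr: "(\<lambda>j. DA (z (r j))) \<longlonglongrightarrow> DA p"
          by (rule continuous_within_tendsto_compose'[OF DAcont zd zr])
        have er: "(\<lambda>j. e (r j)) \<longlonglongrightarrow> 0"
        proof -
          have "(\<lambda>j. norm (e (r j))) \<longlonglongrightarrow> 0"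
          proof (rule tendsto_sandwich[of "\<lambda>_. 0" _ _ "\<lambda>j. \<rho> * norm (h (r j))"])
            show "\<forall>\<^sub>F n in sequentially. norm (e (r n)) \<le> \<rho> * norm (h (r n))"
              unfolding h_def by (intro always_eventually allI) (use hk in blast)
            have "(\<lambda>j. \<rho> * norm (h (r j))) \<longlonglongrightarrow> \<rho> * norm (0::real^'n)" by (intro tendsto_intros hr)
            thus "(\<lambda>j. \<rho> * norm (h (r j))) \<longlonglongrightarrow> 0" by simp
          qed simp_all
          thus ?thesis using tendsto_norm_zero_iff by blast
        qed
        define q0 where "q0 = 0 - transpose (DA p) *v (A p + DA p *v 0)"
        have qr: "(\<lambda>j. q (r j)) \<longlonglongrightarrow> q0"
          unfolding q_def q0_def h_def[symmetric]
          by (intro tendsto_diff er tendsto_mv tendsto_transpose DAr tendsto_add Ar hr)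
        have sq: "q (r j) \<in> subdiff F (xt (r j))" for j by (rule qsub)
        have q0s: "q0 \<in> subdiff F p" by (rule subdiff_limit(1)[OF F_proper F_lsc xtr qr sq pd])
        have Fxr: "(\<lambda>j. real_of_ereal (F (xt (r j)))) \<longlonglongrightarrow> real_of_ereal (F p)"
          by (rule subdiff_limit(2)[OF F_proper F_lsc xtr qr sq pd])
        have "0 \<in> clarke_subdiff A DA F p"
          unfolding clarke_subdiff_def using q0s unfolding q0_def by force
        moreover have "jf p = L"
        proof -
          have "(\<lambda>j. jl (r j)) \<longlonglongrightarrow> 1/2 * (norm (A p + DA p *v 0))\<^sup>2 + real_of_ereal (F p)"
            unfolding jl_def h_def[symmetric] by (intro tendsto_intros Ar tendsto_mv DAr hr Fxr)
          hence "(\<lambda>j. jl (r j)) \<longlonglongrightarrow> jf p" unfolding jf_def by simp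
          moreover have "(\<lambda>j. jl (r j)) \<longlonglongrightarrow> L" using LIMSEQ_subseq_LIMSEQ[OF jlL r(1)] by (simp add: o_def)
          ultimately show ?thesis by (rule LIMSEQ_unique)
        qed
        ultimately show ?thesis using Jf[OF pd] pd by simp
      qed
      have bz: "bounded (range z)"
        using lev by (rule bounded_subset) (auto simp: Jz inv)
      have st: "(\<lambda>k. dist (z (Suc k)) (z k)) \<longlonglongrightarrow> 0"
      proof -
        have "dist (z (Suc k)) (z k) = w * norm (h k)" for k
          unfolding it h_def dist_norm using w by (simp add: algebra_simps flip: scaleR_diff_right)
        moreover have "(\<lambda>k. w * norm (h k)) \<longlonglongrightarrow> w * 0" by (intro tendsto_intros hn)
        ultimately show ?thesis by simp
      qed
      show ?thesis
      proof (intro conjI exI[of _ L] allI impI)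
        show "decseq (\<lambda>k. Jfun A F (z k))" unfolding Jz by (intro decseq_SucI) (simp add: dec)
        show "(\<lambda>k. Jfun A F (z k)) \<longlonglongrightarrow> ereal L" unfolding Jz using L by (simp add: lim_ereal)
        fix p assume "accumulation_point z p"
        thus "0 \<in> clarke_subdiff A DA F p" "Jfun A F p = ereal L" using accP by blast+
      next
        fix U1 U2 :: "(real^'n) set"
        assume U: "closed U1 \<and> closed U2 \<and> U1 \<inter> U2 = {}
                   \<and> {p \<in> effdom F. 0 \<in> clarke_subdiff A DA F p \<and> Jfun A F p = ereal L} = U1 \<union> U2"
        have SU: "p \<in> U1 \<union> U2" if "accumulation_point z p" for p
          using accP[OF that] U by blast
        show "\<exists>U\<in>{U1, U2}. U \<noteq> {} \<and> (\<forall>p. accumulation_point z p \<longrightarrow> p \<in> U) \<and> (\<lambda>k. infdist (z k) U) \<longlonglongrightarrow> 0"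
          using split_acc[OF bz st _ _ _ SU] U by blast
      qed

    qed
    done
qed

end
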